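(* Let $T:\mathbb{R}^d\to\mathbb{R}^d$ be nonexpansive with respect to a norm $\|\cdot\|$ on $\mathbb{R}^d$, with $\operatorname{Fix}T\neq\emptyset$. Let $(\beta_n)_{n\ge1}\subseteq(0,1)$ be nondecreasing with $\lim_n\beta_n=1$, let $x^0\in\mathbb{R}^d$, and let $(x^n)_{n\ge1}$ be generated by $x^n=(1-\beta_n)x^0+\beta_n(Tx^{n-1}+U_n)$, $n\ge1$, where $(U_n)$ are random vectors with $\mathbb{E}(U_n)=0$ and $\sigma_n:=\mathbb{E}(\|U_n\|)<\infty$. Then: (i) If there is $M>0$ with $\|Tx\|\le M$ for all $x\in\mathbb{R}^d$, then $\sup_{n\ge0}\mathbb{E}(\|Tx^n-x^0\|)\le M+\|x^0\|$. (ii) If $S:=\sup_{n\ge1}\sum_{i=1}^n B_i^n\sigma_i<+\infty$, then $\sup_{n\ge0}\mathbb{E}(\|Tx^n-x^0\|)\le 2\operatorname{dist}(x^0,\operatorname{Fix}T)+S$. In particular, if $\sum_n\sigma_n<+\infty$ then $\sup_{n\ge0}\mathbb{E}(\|Tx^n-x^0\|)<+\infty$.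
   Context: Notation: $B_i^n:=\prod_{j=i}^n\beta_j$ (with $B_i^n=1$ if $i>n$). $\operatorname{dist}(x^0,\operatorname{Fix}T)=\inf_{x^*\in\operatorname{Fix}T}\|x^0-x^*\|$. *)

theory Defs
  imports "HOL-Probability.Probability"
begin

definition is_norm :: "('a::real_vector \<Rightarrow> real) \<Rightarrow> bool" where
  "is_norm N \<longleftrightarrow> (\<forall>x. N x = 0 \<longleftrightarrow> x = 0) \<and>
     (\<forall>a x. N (a *\<^sub>R x) = \<bar>a\<bar> * N x) \<and>
     (\<forall>x y. N (x + y) \<le> N x + N y)"

definition nonexpansive_wrt :: "('a::real_vector \<Rightarrow> real) \<Rightarrow> ('a \<Rightarrow> 'a) \<Rightarrow> bool" where
  "nonexpansive_wrt N T \<longleftrightarrow> (\<forall>x y. N (T x - T y) \<le> N (x - y))"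

definition Fix :: "('a \<Rightarrow> 'a) \<Rightarrow> 'a set" where
  "Fix T = {x. T x = x}"

definition distN :: "('a::real_vector \<Rightarrow> real) \<Rightarrow> 'a \<Rightarrow> 'a set \<Rightarrow> real" where
  "distN N x A = (INF p\<in>A. N (x - p))"

definition Bprod :: "(nat \<Rightarrow> real) \<Rightarrow> nat \<Rightarrow> nat \<Rightarrow> real" where
  "Bprod \<beta> i n = (\<Prod>j=i..n. \<beta> j)"

primrec halpern_iter ::
  "('a::real_vector \<Rightarrow> 'a) \<Rightarrow> (nat \<Rightarrow> real) \<Rightarrow> (nat \<Rightarrow> 'b \<Rightarrow> 'a) \<Rightarrow> 'a \<Rightarrow> nat \<Rightarrow> 'b \<Rightarrow> 'a" where
  "halpern_iter T \<beta> U x0 0 \<omega> = x0"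
| "halpern_iter T \<beta> U x0 (Suc n) \<omega> =
     (1 - \<beta> (Suc n)) *\<^sub>R x0 + \<beta> (Suc n) *\<^sub>R (T (halpern_iter T \<beta> U x0 n \<omega>) + U (Suc n) \<omega>)"

end

theory Submission
  imports Defs
begin

lemma isn_nonneg: assumes "is_norm N" shows "N x \<ge> 0"
proof -
  have "N (x + (-x)) \<le> N x + N (-x)" using assms unfolding is_norm_def by blast
  moreover have "N (-x) = N x" using assms unfolding is_norm_def
    by (metis abs_minus_cancel abs_one mult_1 scaleR_minus1_left)
  moreover have "N 0 = 0" using assms unfolding is_norm_def by blast
  ultimately show ?thesis by simp
qed

lemma isn_minus: assumes "is_norm N" shows "N (-x) = N x"
  using assms unfolding is_norm_def
  by (metis abs_minus_cancel abs_one mult_1 scaleR_minus1_left)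

lemma isn_commute: assumes "is_norm N" shows "N (x - y) = N (y - x)"
  using isn_minus[OF assms, of "x - y"] by simp

lemma isn_tri: assumes "is_norm N" shows "N (x + y) \<le> N x + N y"
  using assms unfolding is_norm_def by blast

lemma isn_scale: assumes "is_norm N" "a \<ge> 0" shows "N (a *\<^sub>R x) = a * N x"
  using assms unfolding is_norm_def by simp

lemma Bprod_Suc: assumes "i \<le> Suc n" shows "Bprod \<beta> i (Suc n) = Bprod \<beta> i n * \<beta> (Suc n)"
  using assms unfolding Bprod_def by (simp add: prod.nat_ivl_Suc')

lemma Bprod_range: assumes "\<forall>n\<ge>1. 0 < \<beta> n \<and> \<beta> n < 1" "i \<ge> 1"
  shows "0 \<le> Bprod \<beta> i n \<and> Bprod \<beta> i n \<le> 1"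
  unfolding Bprod_def using assms
  by (auto intro!: prod_nonneg prod_le_1 simp: less_imp_le)

lemma pathwise:
  fixes N :: "'a::real_vector \<Rightarrow> real"
  assumes norm: "is_norm N" and nonexp: "nonexpansive_wrt N T" and fp: "T p = p"
    and beta_range: "\<forall>n\<ge>1. 0 < \<beta> n \<and> \<beta> n < 1"
  shows "N (halpern_iter T \<beta> U x0 n \<omega> - p) \<le> N (x0 - p) + (\<Sum>i=1..n. Bprod \<beta> i n * N (U i \<omega>))"
proof (induction n)
  case 0
  then show ?case by simp
next
  case (Suc n)
  define b where "b = \<beta> (Suc n)"
  have b: "0 \<le> b" "b \<le> 1" using beta_range unfolding b_def by (auto simp: less_imp_le)
  define y where "y = halpern_iter T \<beta> U x0 n \<omega>"
  have eq: "halpern_iter T \<beta> U x0 (Suc n) \<omega> - p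
     = ((1 - b) *\<^sub>R (x0 - p) + b *\<^sub>R (T y - T p)) + b *\<^sub>R U (Suc n) \<omega>"
    using fp by (simp add: y_def b_def algebra_simps)
  have "N (halpern_iter T \<beta> U x0 (Suc n) \<omega> - p)
     \<le> N ((1 - b) *\<^sub>R (x0 - p)) + N (b *\<^sub>R (T y - T p)) + N (b *\<^sub>R U (Suc n) \<omega>)"
    unfolding eq by (meson add_right_mono isn_tri norm order_trans)
  also have "\<dots> = (1 - b) * N (x0 - p) + b * N (T y - T p) + b * N (U (Suc n) \<omega>)"
    using b by (simp add: isn_scale[OF norm])
  also have "\<dots> \<le> (1 - b) * N (x0 - p) + b * N (y - p) + b * N (U (Suc n) \<omega>)"
    using nonexp b unfolding nonexpansive_wrt_def by (simp add: mult_left_mono)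
  also have "\<dots> \<le> (1 - b) * N (x0 - p) + b * (N (x0 - p) + (\<Sum>i=1..n. Bprod \<beta> i n * N (U i \<omega>)))
       + b * N (U (Suc n) \<omega>)"
    using Suc.IH b unfolding y_def by (simp add: mult_left_mono)
  also have "\<dots> = N (x0 - p) + ((\<Sum>i=1..n. Bprod \<beta> i n * N (U i \<omega>)) * b + b * N (U (Suc n) \<omega>))"
    by (simp add: algebra_simps)
  also have "\<dots> = N (x0 - p) + (\<Sum>i=1..Suc n. Bprod \<beta> i (Suc n) * N (U i \<omega>))"
  proof -
    have "(\<Sum>i=1..Suc n. Bprod \<beta> i (Suc n) * N (U i \<omega>))
        = (\<Sum>i=1..n. Bprod \<beta> i (Suc n) * N (U i \<omega>)) + Bprod \<beta> (Suc n) (Suc n) * N (U (Suc n) \<omega>)"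
      by simp
    also have "(\<Sum>i=1..n. Bprod \<beta> i (Suc n) * N (U i \<omega>)) = (\<Sum>i=1..n. Bprod \<beta> i n * N (U i \<omega>)) * b"
      unfolding sum_distrib_right by (rule sum.cong) (auto simp: Bprod_Suc b_def)
    also have "Bprod \<beta> (Suc n) (Suc n) = b" by (simp add: Bprod_def b_def)
    finally show ?thesis by simp
  qed
  finally show ?case .
qed

lemma key_bound:
  fixes N :: "'a::real_vector \<Rightarrow> real" and M :: "'s measure"
  assumes norm: "is_norm N" and nonexp: "nonexpansive_wrt N T" and fp: "T p = p"
    and beta_range: "\<forall>n\<ge>1. 0 < \<beta> n \<and> \<beta> n < 1"
    and prob: "prob_space M"
    and U_normint: "\<forall>n\<ge>1. integrable M (\<lambda>\<omega>. N (U n \<omega>))"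
    and sigma_def: "\<forall>n\<ge>1. \<sigma> n = prob_space.expectation M (\<lambda>\<omega>. N (U n \<omega>))"
  shows "(\<integral>\<^sup>+ \<omega>. ennreal (N (T (halpern_iter T \<beta> U x0 n \<omega>) - x0)) \<partial>M)
     \<le> ennreal (2 * N (x0 - p) + (\<Sum>i=1..n. Bprod \<beta> i n * \<sigma> i))"
proof -
  interpret prob_space M by (rule prob)
  define g where "g \<omega> = 2 * N (x0 - p) + (\<Sum>i=1..n. Bprod \<beta> i n * N (U i \<omega>))" for \<omega>
  have pw: "N (T (halpern_iter T \<beta> U x0 n \<omega>) - x0) \<le> g \<omega>" for \<omega>
  proof -
    have "T (halpern_iter T \<beta> U x0 n \<omega>) - x0 = (T (halpern_iter T \<beta> U x0 n \<omega>) - T p) + (p - x0)"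
      using fp by simp
    then have "N (T (halpern_iter T \<beta> U x0 n \<omega>) - x0) \<le> N (T (halpern_iter T \<beta> U x0 n \<omega>) - T p) + N (p - x0)"
      using isn_tri[OF norm] by metis
    also have "\<dots> \<le> N (halpern_iter T \<beta> U x0 n \<omega> - p) + N (x0 - p)"
      using nonexp fp isn_commute[OF norm, of p x0] unfolding nonexpansive_wrt_def by (metis add_right_mono)
    also have "\<dots> \<le> g \<omega>"
      using pathwise[OF norm nonexp fp beta_range, of U x0 n \<omega>] unfolding g_def by simp
    finally show ?thesis .
  qed
  have int: "integrable M g" unfolding g_def
    using U_normint by (intro Bochner_Integration.integrable_add integrable_const Bochner_Integration.integrable_sum integrable_mult_right) auto
  have gnn: "g \<omega> \<ge> 0" for \<omega>
    unfolding g_def using isn_nonneg[OF norm] Bprod_range[OF beta_range]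
    by (intro add_nonneg_nonneg sum_nonneg mult_nonneg_nonneg) auto
  have "(\<integral>\<^sup>+ \<omega>. ennreal (N (T (halpern_iter T \<beta> U x0 n \<omega>) - x0)) \<partial>M) \<le> (\<integral>\<^sup>+ \<omega>. ennreal (g \<omega>) \<partial>M)"
    by (intro nn_integral_mono ennreal_leI pw)
  also have "\<dots> = ennreal (integral\<^sup>L M g)"
    using int gnn by (intro nn_integral_eq_integral) auto
  also have "integral\<^sup>L M g = 2 * N (x0 - p) + (\<Sum>i=1..n. Bprod \<beta> i n * \<sigma> i)"
  proof -
    have i1: "integrable M (\<lambda>\<omega>. (\<Sum>i=1..n. Bprod \<beta> i n * N (U i \<omega>)))"
      using U_normint by (intro Bochner_Integration.integrable_sum integrable_mult_right) auto
    have "integral\<^sup>L M g = 2 * N (x0 - p) + integral\<^sup>L M (\<lambda>\<omega>. (\<Sum>i=1..n. Bprod \<beta> i n * N (U i \<omega>)))"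
      unfolding g_def using i1 by (subst Bochner_Integration.integral_add) (auto simp: prob_space)
    also have "integral\<^sup>L M (\<lambda>\<omega>. (\<Sum>i=1..n. Bprod \<beta> i n * N (U i \<omega>))) = (\<Sum>i=1..n. Bprod \<beta> i n * \<sigma> i)"
      using U_normint sigma_def by (subst Bochner_Integration.integral_sum) auto
    finally show ?thesis .
  qed
  finally show ?thesis .
qed

theorem lemma1:
  fixes N :: "real ^ 'd \<Rightarrow> real"
    and T :: "real ^ 'd \<Rightarrow> real ^ 'd"
    and \<beta> :: "nat \<Rightarrow> real"
    and M :: "'s measure"
    and U :: "nat \<Rightarrow> 's \<Rightarrow> real ^ 'd"
    and x0 :: "real ^ 'd"
    and \<sigma> :: "nat \<Rightarrow> real"
  assumes norm: "is_norm N"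
    and nonexp: "nonexpansive_wrt N T"
    and fix_ne: "Fix T \<noteq> {}"
    and beta_range: "\<forall>n\<ge>1. 0 < \<beta> n \<and> \<beta> n < 1"
    and beta_mono: "\<forall>n\<ge>1. \<beta> n \<le> \<beta> (Suc n)"
    and beta_lim: "\<beta> \<longlonglongrightarrow> 1"
    and prob: "prob_space M"
    and U_meas: "\<forall>n\<ge>1. U n \<in> borel_measurable M"
    and U_int: "\<forall>n\<ge>1. integrable M (U n)"
    and U_mean: "\<forall>n\<ge>1. prob_space.expectation M (U n) = 0"
    and U_normint: "\<forall>n\<ge>1. integrable M (\<lambda>\<omega>. N (U n \<omega>))"
    and sigma_def: "\<forall>n\<ge>1. \<sigma> n = prob_space.expectation M (\<lambda>\<omega>. N (U n \<omega>))"
  shows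
    "(\<forall>C>0. (\<forall>x. N (T x) \<le> C) \<longrightarrow>
        (SUP n. \<integral>\<^sup>+ \<omega>. ennreal (N (T (halpern_iter T \<beta> U x0 n \<omega>) - x0)) \<partial>M)
          \<le> ennreal (C + N x0))
     \<and> (bdd_above ((\<lambda>n. \<Sum>i=1..n. Bprod \<beta> i n * \<sigma> i) ` {1..}) \<longrightarrow>
        (SUP n. \<integral>\<^sup>+ \<omega>. ennreal (N (T (halpern_iter T \<beta> U x0 n \<omega>) - x0)) \<partial>M)
          \<le> ennreal (2 * distN N x0 (Fix T)
                     + (SUP n\<in>{1..}. \<Sum>i=1..n. Bprod \<beta> i n * \<sigma> i)))
     \<and> (summable (\<lambda>n. \<sigma> (Suc n)) \<longrightarrow>
        (SUP n. \<integral>\<^sup>+ \<omega>. ennreal (N (T (halpern_iter T \<beta> U x0 n \<omega>) - x0)) \<partial>M) < \<infinity>)"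
proof -
  interpret P: prob_space M by (rule prob)
  define E where "E n = (\<integral>\<^sup>+ \<omega>. ennreal (N (T (halpern_iter T \<beta> U x0 n \<omega>) - x0)) \<partial>M)" for n
  define s where "s n = (\<Sum>i=1..n. Bprod \<beta> i n * \<sigma> i)" for n
  have Nnn: "\<And>x. N x \<ge> 0" using isn_nonneg[OF norm] .
  have sig_nn: "\<sigma> i \<ge> 0" if "i \<ge> 1" for i
    using sigma_def that Nnn by (simp add: integral_nonneg_AE)
  have s_nn: "s n \<ge> 0" for n
    unfolding s_def using sig_nn Bprod_range[OF beta_range]
    by (intro sum_nonneg mult_nonneg_nonneg) auto
  have partI: "(\<forall>C>0. (\<forall>x. N (T x) \<le> C) \<longrightarrow> (SUP n. E n) \<le> ennreal (C + N x0))"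
  proof (intro allI impI)
    fix C :: real assume C: "C > 0" "\<forall>x. N (T x) \<le> C"
    show "(SUP n. E n) \<le> ennreal (C + N x0)"
    proof (rule SUP_least)
      fix n
      have "E n \<le> (\<integral>\<^sup>+ \<omega>. ennreal (C + N x0) \<partial>M)"
        unfolding E_def
      proof (intro nn_integral_mono ennreal_leI)
        fix \<omega>
        have "N (T (halpern_iter T \<beta> U x0 n \<omega>) - x0) \<le> N (T (halpern_iter T \<beta> U x0 n \<omega>)) + N (- x0)"
          using isn_tri[OF norm] by (metis diff_conv_add_uminus)
        then show "N (T (halpern_iter T \<beta> U x0 n \<omega>) - x0) \<le> C + N x0"
          using C isn_minus[OF norm, of x0] by (metis add_right_mono order_trans)
      qed
      also have "\<dots> = ennreal (C + N x0)" by (simp add: P.emeasure_space_1)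
      finally show "E n \<le> ennreal (C + N x0)" .
    qed
  qed
  have partII: "bdd_above (s ` {1..}) \<longrightarrow> (SUP n. E n) \<le> ennreal (2 * distN N x0 (Fix T) + (SUP n\<in>{1..}. s n))"
  proof
    assume bdd: "bdd_above (s ` {1..})"
    define S where "S = (SUP n\<in>{1..}. s n)"
    have sS: "s n \<le> S" for n
    proof (cases "n = 0")
      case True
      have "s 1 \<le> S" unfolding S_def using bdd by (intro cSUP_upper) auto
      then show ?thesis using True s_nn[of 1] by (simp add: s_def)
    next
      case False
      then show ?thesis unfolding S_def using bdd by (intro cSUP_upper) auto
    qed
    have Sn: "S \<ge> 0" using sS[of 0] s_nn[of 0] by simp
    show "(SUP n. E n) \<le> ennreal (2 * distN N x0 (Fix T) + S)"
    proof (rule SUP_least)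
      fix n
      have bp: "E n \<le> ennreal (2 * N (x0 - p) + S)" if "p \<in> Fix T" for p
      proof -
        have "E n \<le> ennreal (2 * N (x0 - p) + s n)"
          unfolding E_def s_def
          using key_bound[OF norm nonexp _ beta_range prob U_normint sigma_def] that
          by (auto simp: Fix_def)
        also have "\<dots> \<le> ennreal (2 * N (x0 - p) + S)" using sS[of n] by (intro ennreal_leI) simp
        finally show ?thesis .
      qed
      obtain p0 where p0: "p0 \<in> Fix T" using fix_ne by blast
      have "E n \<noteq> \<infinity>" using bp[OF p0] by (auto simp: top_unique)
      then obtain r where r: "E n = ennreal r" "r \<ge> 0" by (cases "E n") auto
      have rle: "r \<le> 2 * N (x0 - p) + S" if "p \<in> Fix T" for p
      proof -
        have "0 \<le> 2 * N (x0 - p) + S" using Nnn[of "x0 - p"] Sn by simp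
        then show ?thesis using bp[OF that] r(1) by (metis ennreal_le_iff)
      qed
      have "(r - S) / 2 \<le> distN N x0 (Fix T)"
        unfolding distN_def using fix_ne rle by (intro cINF_greatest) (auto simp: field_simps)
      then have "r \<le> 2 * distN N x0 (Fix T) + S" by simp
      then show "E n \<le> ennreal (2 * distN N x0 (Fix T) + S)" using r by (simp add: ennreal_leI)
    qed
  qed
  have partIII: "summable (\<lambda>n. \<sigma> (Suc n)) \<longrightarrow> (SUP n. E n) < \<infinity>"
  proof
    assume sm: "summable (\<lambda>n. \<sigma> (Suc n))"
    have "s n \<le> (\<Sum>n. \<sigma> (Suc n))" for n
    proof -
      have "s n \<le> (\<Sum>i=1..n. \<sigma> i)"
        unfolding s_def using Bprod_range[OF beta_range] sig_nn
        by (intro sum_mono) (auto intro: mult_left_le_one_le)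
      also have "\<dots> = (\<Sum>i<n. \<sigma> (Suc i))" by (simp add: sum.atLeast1_atMost_eq)
      also have "\<dots> \<le> (\<Sum>n. \<sigma> (Suc n))" using sm sig_nn by (intro sum_le_suminf) auto
      finally show ?thesis .
    qed
    then have "bdd_above (s ` {1..})" by (intro bdd_aboveI) auto
    then have "(SUP n. E n) \<le> ennreal (2 * distN N x0 (Fix T) + (SUP n\<in>{1..}. s n))" using partII by blast
    then show "(SUP n. E n) < \<infinity>" by (simp add: le_less_trans)
  qed
  show ?thesis using partI partII partIII unfolding E_def s_def by blast
qed

end
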